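(* Let $N\in\mathbb N$, $\Sigma_N=\{1,\ldots,N\}^{\mathbb Z}$ with the shift $\sigma$, $I=[0,1]$, and let $f_1,\ldots,f_N\colon I\to f_i(I)\subset I$ be $C^1$-diffeomorphisms onto their images. Let $F\colon\Sigma_N\times I\to\Sigma_N\times I$, $F(\xi,p)=(\sigma(\xi),f_{\xi_0}(p))$, and let $\Lambda=\bigcap_{n\ge0}F^n(\Sigma_N\times I)$. Then for every $F$-invariant hyperbolic set $H\subset\Lambda$ there exists $M\ge1$ such that $\#H_\xi\le M$ for all $\xi\in\Sigma_N$, where $H_\xi:=\Pi_2(H\cap(\{\xi\}\times I))$.
   Context: $\Pi_2\colon\Sigma_N\times I\to I$ is the projection onto the second coordinate. For $k\le m$ write $f_{\xi_k\ldots\xi_m}:=f_{\xi_m}\circ\cdots\circ f_{\xi_k}$. On $\Lambda$ the map $F$ is invertible, with $F^{-1}(\xi,p)=(\sigma^{-1}(\xi),f_{\xi_{-1}}^{-1}(p))$. A set $H\subset\Lambda$ is hyperbolic with fiber contraction if there are $c>0$ and $0<\lambda<1$ with $|(f_{\xi_0\ldots\xi_{n-1}})'(p)|\le c\lambda^n$ for all $n\ge1$ and all $(\xi,p)\in H$. It is hyperbolic with fiber expansion if it is hyperbolic with fiber contraction with respect to $F^{-1}$, i.e. the analogous bound holds for the derivatives of the fiber components of $F^{-n}$ restricted to $\Lambda$. $H$ is hyperbolic if it is hyperbolic with fiber contraction or with fiber expansion. *)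

theory Defs
  imports "HOL-Analysis.Analysis"
begin

abbreviation unitI :: "real set" where "unitI \<equiv> {0..1}"

definition SigmaN :: "nat \<Rightarrow> (int \<Rightarrow> nat) set" where
  "SigmaN N = {\<xi>. \<forall>k. \<xi> k \<in> {1..N}}"

definition shift :: "(int \<Rightarrow> nat) \<Rightarrow> (int \<Rightarrow> nat)" where
  "shift \<xi> = (\<lambda>k. \<xi> (k + 1))"

definition shift_inv :: "(int \<Rightarrow> nat) \<Rightarrow> (int \<Rightarrow> nat)" where
  "shift_inv \<xi> = (\<lambda>k. \<xi> (k - 1))"

text \<open>f is a C^1-diffeomorphism from I onto its image f(I), with f(I) a subset of I
  (one-sided derivatives at the endpoints; the derivative is continuous and nonvanishing,
  so the inverse is C^1 as well).\<close>
definition C1_diffeo_into_I :: "(real \<Rightarrow> real) \<Rightarrow> bool" where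
  "C1_diffeo_into_I f \<longleftrightarrow>
     f ` unitI \<subseteq> unitI \<and> inj_on f unitI \<and>
     (\<exists>f'. (\<forall>x\<in>unitI. (f has_real_derivative f' x) (at x within unitI)) \<and>
           continuous_on unitI f' \<and> (\<forall>x\<in>unitI. f' x \<noteq> 0))"

definition skewF :: "(nat \<Rightarrow> real \<Rightarrow> real) \<Rightarrow> (int \<Rightarrow> nat) \<times> real \<Rightarrow> (int \<Rightarrow> nat) \<times> real" where
  "skewF f = (\<lambda>(\<xi>, p). (shift \<xi>, f (\<xi> 0) p))"

definition skewF_inv :: "(nat \<Rightarrow> real \<Rightarrow> real) \<Rightarrow> (int \<Rightarrow> nat) \<times> real \<Rightarrow> (int \<Rightarrow> nat) \<times> real" where
  "skewF_inv f = (\<lambda>(\<xi>, p). (shift_inv \<xi>, the_inv_into unitI (f (\<xi> (-1))) p))"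

definition LambdaSet :: "nat \<Rightarrow> (nat \<Rightarrow> real \<Rightarrow> real) \<Rightarrow> ((int \<Rightarrow> nat) \<times> real) set" where
  "LambdaSet N f = (\<Inter>n. (skewF f ^^ n) ` (SigmaN N \<times> unitI))"

text \<open>Hyperbolic with fiber contraction: |(f_{xi_0...xi_{n-1}})'(p)| <= c lambda^n, where
  f_{xi_0...xi_{n-1}} = f_{xi_{n-1}} o ... o f_{xi_0} is the fiber component of F^n
  (derivative taken on I).\<close>
definition hyp_fiber_contraction :: "(nat \<Rightarrow> real \<Rightarrow> real) \<Rightarrow> ((int \<Rightarrow> nat) \<times> real) set \<Rightarrow> bool" where
  "hyp_fiber_contraction f H \<longleftrightarrow>
     (\<exists>c lam. c > 0 \<and> 0 < lam \<and> lam < 1 \<and>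
       (\<forall>n\<ge>1. \<forall>(\<xi>, p)\<in>H.
          \<bar>vector_derivative (\<lambda>q. snd ((skewF f ^^ n) (\<xi>, q))) (at p within unitI)\<bar> \<le> c * lam ^ n))"

text \<open>For fixed xi, the fiber component of F^{-n} is
  q \<mapsto> f_{xi_{-n}}^{-1} o ... o f_{xi_{-1}}^{-1} (q), defined on the image
  f_{xi_{-n}...xi_{-1}}(I) = fiber component of F^n over sigma^{-n} xi applied to I;
  the derivative is taken within that interval.\<close>
definition hyp_fiber_expansion :: "(nat \<Rightarrow> real \<Rightarrow> real) \<Rightarrow> ((int \<Rightarrow> nat) \<times> real) set \<Rightarrow> bool" where
  "hyp_fiber_expansion f H \<longleftrightarrow>
     (\<exists>c lam. c > 0 \<and> 0 < lam \<and> lam < 1 \<and>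
       (\<forall>n\<ge>1. \<forall>(\<xi>, p)\<in>H.
          \<bar>vector_derivative (\<lambda>q. snd ((skewF_inv f ^^ n) (\<xi>, q)))
              (at p within ((\<lambda>q. snd ((skewF f ^^ n) ((shift_inv ^^ n) \<xi>, q))) ` unitI))\<bar>
            \<le> c * lam ^ n))"

definition hyperbolic_set :: "(nat \<Rightarrow> real \<Rightarrow> real) \<Rightarrow> ((int \<Rightarrow> nat) \<times> real) set \<Rightarrow> bool" where
  "hyperbolic_set f H \<longleftrightarrow> hyp_fiber_contraction f H \<or> hyp_fiber_expansion f H"

definition fiber :: "((int \<Rightarrow> nat) \<times> real) set \<Rightarrow> (int \<Rightarrow> nat) \<Rightarrow> real set" where
  "fiber H \<xi> = snd ` (H \<inter> ({\<xi>} \<times> unitI))"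

end

theory Submission
  imports Defs
begin


lemma shift_pow: "(shift ^^ n) \<eta> = (\<lambda>k. \<eta> (k + int n))"
  by (induction n arbitrary: \<eta>) (auto simp: shift_def add.assoc)

lemma shift_inv_pow: "(shift_inv ^^ n) \<eta> = (\<lambda>k. \<eta> (k - int n))"
  by (induction n arbitrary: \<eta>) (auto simp: shift_inv_def algebra_simps)

lemma shift_shift_inv_pow: "(shift ^^ n) ((shift_inv ^^ n) \<xi>) = \<xi>"
  by (simp add: shift_pow shift_inv_pow)

lemma shift_inv_shift_pow: "(shift_inv ^^ n) ((shift ^^ n) \<xi>) = \<xi>"
  by (simp add: shift_pow shift_inv_pow)

fun gcomp :: "(nat \<Rightarrow> real \<Rightarrow> real) \<Rightarrow> (int \<Rightarrow> nat) \<Rightarrow> nat \<Rightarrow> real \<Rightarrow> real" where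
  "gcomp f \<eta> 0 q = q"
| "gcomp f \<eta> (Suc n) q = f (\<eta> (int n)) (gcomp f \<eta> n q)"

fun Gd :: "(nat \<Rightarrow> real \<Rightarrow> real) \<Rightarrow> (nat \<Rightarrow> real \<Rightarrow> real) \<Rightarrow> (int \<Rightarrow> nat) \<Rightarrow> nat \<Rightarrow> real \<Rightarrow> real" where
  "Gd f fd \<eta> 0 q = 1"
| "Gd f fd \<eta> (Suc n) q = fd (\<eta> (int n)) (gcomp f \<eta> n q) * Gd f fd \<eta> n q"

lemma skewF_pow: "(skewF f ^^ n) (\<eta>, q) = ((shift ^^ n) \<eta>, gcomp f \<eta> n q)"
  by (induction n) (auto simp: skewF_def shift_pow)

lemma gcomp_cong: "(\<And>j. j < n \<Longrightarrow> \<eta> (int j) = \<theta> (int j)) \<Longrightarrow> gcomp f \<eta> n = gcomp f \<theta> n"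
  by (induction n) auto

lemma Gd_cong: "(\<And>j. j < n \<Longrightarrow> \<eta> (int j) = \<theta> (int j)) \<Longrightarrow> Gd f fd \<eta> n = Gd f fd \<theta> n"
proof (induction n)
  case (Suc n)
  then have "gcomp f \<eta> n = gcomp f \<theta> n" by (intro gcomp_cong) auto
  with Suc show ?case by auto
qed auto

lemma skewF_inv_skewF:
  assumes "\<xi> 0 \<in> {1..N}" "q \<in> unitI" "\<forall>i\<in>{1..N}. inj_on (f i) unitI"
  shows "skewF_inv f (skewF f (\<xi>, q)) = (\<xi>, q)"
  using assms by (auto simp: skewF_def skewF_inv_def shift_def shift_inv_def the_inv_into_f_f)

locale setting =
  fixes N :: nat and f fd :: "nat \<Rightarrow> real \<Rightarrow> real"
  assumes maps: "\<And>i x. i \<in> {1..N} \<Longrightarrow> x \<in> unitI \<Longrightarrow> f i x \<in> unitI"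
    and inj: "\<And>i. i \<in> {1..N} \<Longrightarrow> inj_on (f i) unitI"
    and der: "\<And>i x. i \<in> {1..N} \<Longrightarrow> x \<in> unitI \<Longrightarrow> (f i has_real_derivative fd i x) (at x within unitI)"
    and fdcont: "\<And>i. i \<in> {1..N} \<Longrightarrow> continuous_on unitI (fd i)"
    and fdnz: "\<And>i x. i \<in> {1..N} \<Longrightarrow> x \<in> unitI \<Longrightarrow> fd i x \<noteq> 0"
begin

lemma gcomp_in: "(\<And>j. j < n \<Longrightarrow> \<eta> (int j) \<in> {1..N}) \<Longrightarrow> q \<in> unitI \<Longrightarrow> gcomp f \<eta> n q \<in> unitI"
  by (induction n) (auto intro!: maps simp del: atLeastAtMost_iff)

lemma gcomp_deriv:
  assumes "\<And>j. j < n \<Longrightarrow> \<eta> (int j) \<in> {1..N}" "q \<in> unitI"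
  shows "(gcomp f \<eta> n has_real_derivative Gd f fd \<eta> n q) (at q within unitI)"
  using assms
proof (induction n)
  case 0
  then show ?case by (simp add: DERIV_ident[unfolded id_def] del: atLeastAtMost_iff)
next
  case (Suc n)
  have i: "\<eta> (int n) \<in> {1..N}" using Suc by auto
  have g: "gcomp f \<eta> n q \<in> unitI" using Suc by (intro gcomp_in) auto
  have IH: "(gcomp f \<eta> n has_real_derivative Gd f fd \<eta> n q) (at q within unitI)"
    using Suc by auto
  have sub: "gcomp f \<eta> n ` unitI \<subseteq> unitI" using Suc by (auto intro!: gcomp_in simp del: atLeastAtMost_iff)
  have d1: "(f (\<eta> (int n)) has_real_derivative fd (\<eta> (int n)) (gcomp f \<eta> n q))
      (at (gcomp f \<eta> n q) within gcomp f \<eta> n ` unitI)"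
    by (rule has_field_derivative_subset[OF der[OF i g] sub])
  have "(f (\<eta> (int n)) \<circ> gcomp f \<eta> n has_real_derivative fd (\<eta> (int n)) (gcomp f \<eta> n q) * Gd f fd \<eta> n q) (at q within unitI)"
    by (rule DERIV_image_chain[OF d1 IH])
  then show ?case by (simp add: o_def)
qed

lemma gcomp_cont:
  assumes "\<And>j. j < n \<Longrightarrow> \<eta> (int j) \<in> {1..N}"
  shows "continuous_on unitI (gcomp f \<eta> n)"
  unfolding continuous_on_eq_continuous_within
  using gcomp_deriv[of n \<eta>] assms DERIV_continuous by blast

lemma Gd_cont:
  assumes "\<And>j. j < n \<Longrightarrow> \<eta> (int j) \<in> {1..N}"
  shows "continuous_on unitI (Gd f fd \<eta> n)"
  using assms
proof (induction n)
  case (Suc n)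
  have i: "\<eta> (int n) \<in> {1..N}" using Suc by auto
  have c1: "continuous_on unitI (\<lambda>q. fd (\<eta> (int n)) (gcomp f \<eta> n q))"
    by (rule continuous_on_compose2[OF fdcont[OF i] gcomp_cont]) (use Suc in \<open>auto intro!: gcomp_in simp del: atLeastAtMost_iff\<close>)
  show ?case using Suc c1 by (auto intro!: continuous_intros)
qed auto

lemma Gd_nz:
  assumes "\<And>j. j < n \<Longrightarrow> \<eta> (int j) \<in> {1..N}" "q \<in> unitI"
  shows "Gd f fd \<eta> n q \<noteq> 0"
  using assms
proof (induction n)
  case (Suc n)
  have i: "\<eta> (int n) \<in> {1..N}" using Suc by auto
  have g: "gcomp f \<eta> n q \<in> unitI" using Suc by (intro gcomp_in) auto
  show ?case using Suc fdnz[OF i g] by auto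
qed auto

lemma gcomp_inj:
  assumes "\<And>j. j < n \<Longrightarrow> \<eta> (int j) \<in> {1..N}"
  shows "inj_on (gcomp f \<eta> n) unitI"
  using assms
proof (induction n)
  case 0
  then show ?case by (simp add: inj_on_def)
next
  case (Suc n)
  have i: "\<eta> (int n) \<in> {1..N}" using Suc by auto
  have sub: "gcomp f \<eta> n ` unitI \<subseteq> unitI" using Suc by (auto intro!: gcomp_in simp del: atLeastAtMost_iff)
  have "inj_on (f (\<eta> (int n)) \<circ> gcomp f \<eta> n) unitI"
    by (rule comp_inj_on) (use Suc inj[OF i] inj_on_subset[OF _ sub] in auto)
  then show ?case by (simp add: o_def)
qed

end


lemma unif_finite:
  fixes FS :: "(real \<Rightarrow> real) set"
  assumes "finite FS" "\<forall>g\<in>FS. continuous_on unitI g" "\<epsilon> > 0"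
  shows "\<exists>\<delta>>0. \<forall>g\<in>FS. \<forall>x\<in>unitI. \<forall>y\<in>unitI. \<bar>x - y\<bar> < \<delta> \<longrightarrow> \<bar>g x - g y\<bar> < \<epsilon>"
  using assms(1,2)
proof (induction rule: finite_induct)
  case empty
  then show ?case by (intro exI[of _ 1]) auto
next
  case (insert g F)
  then obtain d1 where d1: "d1 > 0" "\<forall>g\<in>F. \<forall>x\<in>unitI. \<forall>y\<in>unitI. \<bar>x - y\<bar> < d1 \<longrightarrow> \<bar>g x - g y\<bar> < \<epsilon>"
    by auto
  have "uniformly_continuous_on unitI g"
    using insert by (intro compact_uniformly_continuous) auto
  then obtain d2 where d2: "d2 > 0" "\<forall>x\<in>unitI. \<forall>x'\<in>unitI. dist x' x < d2 \<longrightarrow> dist (g x') (g x) < \<epsilon>"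
    unfolding uniformly_continuous_on_def using \<open>\<epsilon> > 0\<close> by metis
  show ?case
  proof (intro exI[of _ "min d1 d2"] conjI ballI impI)
    fix h x y assume h: "h \<in> insert g F" and x: "x \<in> unitI" and y: "y \<in> unitI" and xy: "\<bar>x - y\<bar> < min d1 d2"
    show "\<bar>h x - h y\<bar> < \<epsilon>"
    proof (cases "h = g")
      case True
      then show ?thesis using d2(2) x y xy by (auto simp: dist_real_def)
    next
      case False
      then show ?thesis using d1(2) h x y xy by auto
    qed
  qed (use d1 d2 in auto)
qed

lemma mvt_I:
  fixes g D :: "real \<Rightarrow> real"
  assumes der: "\<And>z. z \<in> unitI \<Longrightarrow> (g has_real_derivative D z) (at z within unitI)"
    and x: "x \<in> unitI" and y: "y \<in> unitI" and xy: "x < y"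
  shows "\<exists>z. x < z \<and> z < y \<and> g y - g x = D z * (y - x)"
proof -
  have cont: "continuous_on unitI g"
    unfolding continuous_on_eq_continuous_within using der DERIV_continuous by blast
  have c: "continuous_on {x..y} g"
    by (rule continuous_on_subset[OF cont]) (use x y in auto)
  have datz: "(g has_real_derivative D z) (at z)" if "x < z" "z < y" for z
  proof -
    have "0 < z" "z < 1" using that x y by auto
    then have "at z within unitI = at z" by (rule at_within_Icc_at)
    then show ?thesis using der[of z] \<open>0 < z\<close> \<open>z < 1\<close> by auto
  qed
  obtain l z where lz: "x < z" "z < y" "DERIV g z :> l" "g y - g x = (y - x) * l"
    using MVT[OF xy c] datz real_differentiable_def by meson
  have "l = D z" using DERIV_unique[OF lz(3) datz[OF lz(1,2)]] .
  then show ?thesis using lz by (auto simp: mult.commute)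
qed

lemma inv_deriv_within:
  fixes g h :: "real \<Rightarrow> real"
  assumes dg: "(g has_real_derivative D) (at x within S)" and D: "D \<noteq> 0" and xS: "x \<in> S"
    and hg: "\<And>y. y \<in> S \<Longrightarrow> h (g y) = y"
    and ch: "continuous (at (g x) within g ` S) h"
  shows "(h has_real_derivative inverse D) (at (g x) within g ` S)"
proof -
  let ?p = "g x"
  let ?F = "at ?p within g ` S"
  have l1: "((\<lambda>z. (g z - g x) / (z - x)) \<longlongrightarrow> D) (at x within S)"
    using dg has_field_derivative_iff by blast
  have hp: "h ?p = x" using hg xS by auto
  have ev: "eventually (\<lambda>u. h u \<in> S \<and> h u \<noteq> x) ?F"
    unfolding eventually_at_filter
  proof (intro always_eventually allI impI)
    fix u assume "u \<noteq> ?p" "u \<in> g ` S"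
    then obtain y where "y \<in> S" "u = g y" by auto
    then show "h u \<in> S \<and> h u \<noteq> x" using hg \<open>u \<noteq> ?p\<close> by auto
  qed
  have tl: "(h \<longlongrightarrow> x) ?F" using ch hp by (simp add: continuous_within)
  have fl: "filterlim h (at x within S) ?F"
    using ev tl by (simp add: filterlim_at)
  have l2: "((\<lambda>u. (g (h u) - g x) / (h u - x)) \<longlongrightarrow> D) ?F"
    by (rule filterlim_compose[OF l1 fl])
  have ev2: "eventually (\<lambda>u. (g (h u) - g x) / (h u - x) = (u - ?p) / (h u - h ?p)) ?F"
    unfolding eventually_at_filter
  proof (intro always_eventually allI impI)
    fix u assume "u \<noteq> ?p" "u \<in> g ` S"
    then obtain y where "y \<in> S" "u = g y" by auto
    then show "(g (h u) - g x) / (h u - x) = (u - ?p) / (h u - h ?p)" using hg hp by auto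
  qed
  have l3: "((\<lambda>u. (u - ?p) / (h u - h ?p)) \<longlongrightarrow> D) ?F"
    using tendsto_cong[OF ev2] l2 by simp
  have l4: "((\<lambda>u. inverse ((u - ?p) / (h u - h ?p))) \<longlongrightarrow> inverse D) ?F"
    by (rule tendsto_inverse[OF l3 D])
  then have "((\<lambda>u. (h u - h ?p) / (u - ?p)) \<longlongrightarrow> inverse D) ?F"
    by simp
  then show ?thesis using has_field_derivative_iff by blast
qed

lemma sep_card:
  fixes P :: "real set"
  assumes "finite P" "P \<subseteq> unitI" "\<delta> > 0" "\<forall>x\<in>P. \<forall>y\<in>P. x \<noteq> y \<longrightarrow> \<delta> \<le> \<bar>x - y\<bar>"
  shows "card P \<le> nat \<lfloor>1 / \<delta>\<rfloor> + 1"
proof -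
  let ?k = "\<lambda>x. nat \<lfloor>x / \<delta>\<rfloor>"
  have inj: "inj_on ?k P"
  proof (rule inj_onI, rule ccontr)
    fix x y assume x: "x \<in> P" and y: "y \<in> P" and e: "?k x = ?k y" and ne: "x \<noteq> y"
    have "x \<ge> 0" "y \<ge> 0" using x y assms(2) by auto
    then have "\<lfloor>x / \<delta>\<rfloor> \<ge> 0" "\<lfloor>y / \<delta>\<rfloor> \<ge> 0" using assms(3) by auto
    then have "\<lfloor>x / \<delta>\<rfloor> = \<lfloor>y / \<delta>\<rfloor>" using e by (metis nat_eq_iff2)
    then have "\<bar>x / \<delta> - y / \<delta>\<bar> < 1" by linarith
    then have "\<bar>x - y\<bar> / \<delta> < 1" using assms(3) by (simp add: diff_divide_distrib[symmetric])
    then have "\<bar>x - y\<bar> < \<delta>" using assms(3) by (simp add: divide_less_eq)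
    then show False using assms(4) x y ne by force
  qed
  have img: "?k ` P \<subseteq> {0..nat \<lfloor>1 / \<delta>\<rfloor>}"
  proof
    fix u assume "u \<in> ?k ` P"
    then obtain x where x: "x \<in> P" "u = ?k x" by auto
    have "x \<le> 1" using x assms(2) by auto
    then have "x / \<delta> \<le> 1 / \<delta>" using assms(3) by (simp add: divide_right_mono)
    then have "\<lfloor>x / \<delta>\<rfloor> \<le> \<lfloor>1 / \<delta>\<rfloor>" by (rule floor_mono)
    then show "u \<in> {0..nat \<lfloor>1 / \<delta>\<rfloor>}" using x by auto
  qed
  have "card P \<le> card {0..nat \<lfloor>1 / \<delta>\<rfloor>}"
    by (rule card_inj_on_le[OF inj img]) simp
  then show ?thesis by simp
qed

context setting begin

lemma Gd_unif:
  assumes "\<epsilon> > 0"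
  shows "\<exists>\<delta>>0. \<forall>\<eta>\<in>SigmaN N. \<forall>x\<in>unitI. \<forall>y\<in>unitI. \<bar>x - y\<bar> < \<delta> \<longrightarrow> \<bar>Gd f fd \<eta> n x - Gd f fd \<eta> n y\<bar> < \<epsilon>"
proof -
  let ?A = "PiE (int ` {..<n}) (\<lambda>_. {1..N})"
  let ?FS = "(\<lambda>\<theta>. Gd f fd \<theta> n) ` ?A"
  have fin: "finite ?FS" by (intro finite_imageI finite_PiE) auto
  have cont: "\<forall>g\<in>?FS. continuous_on unitI g"
  proof
    fix g assume "g \<in> ?FS"
    then obtain \<theta> where "\<theta> \<in> ?A" "g = Gd f fd \<theta> n" by auto
    moreover have "\<And>j. j < n \<Longrightarrow> \<theta> (int j) \<in> {1..N}" using \<open>\<theta> \<in> ?A\<close> by (auto simp: PiE_iff)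
    ultimately show "continuous_on unitI g" using Gd_cont by blast
  qed
  obtain \<delta> where d: "\<delta> > 0" "\<forall>g\<in>?FS. \<forall>x\<in>unitI. \<forall>y\<in>unitI. \<bar>x - y\<bar> < \<delta> \<longrightarrow> \<bar>g x - g y\<bar> < \<epsilon>"
    using unif_finite[OF fin cont assms] by blast
  show ?thesis
  proof (intro exI[of _ \<delta>] conjI ballI impI)
    fix \<eta> x y assume \<eta>: "\<eta> \<in> SigmaN N" and x: "x \<in> unitI" and y: "y \<in> unitI" and xy: "\<bar>x - y\<bar> < \<delta>"
    let ?\<theta> = "restrict \<eta> (int ` {..<n})"
    have th: "?\<theta> \<in> ?A" using \<eta> by (auto simp: SigmaN_def)
    have "Gd f fd \<eta> n = Gd f fd ?\<theta> n" by (rule Gd_cong) auto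
    then show "\<bar>Gd f fd \<eta> n x - Gd f fd \<eta> n y\<bar> < \<epsilon>" using d(2) th x y xy by auto
  qed (use d in auto)
qed

end


lemma Tpow_fst:
  fixes T :: "('a \<times> real) \<Rightarrow> ('a \<times> real)"
  assumes Tfst: "\<And>\<eta> x. fst (T (\<eta>, x)) = \<phi> \<eta>"
  shows "fst ((T ^^ k) (\<eta>, x)) = (\<phi> ^^ k) \<eta>"
proof (induction k)
  case (Suc k)
  have "(T ^^ Suc k) (\<eta>, x) = T ((T ^^ k) (\<eta>, x))" by simp
  also have "\<dots> = T ((\<phi> ^^ k) \<eta>, snd ((T ^^ k) (\<eta>, x)))"
    using Suc by (metis prod.collapse)
  finally show ?case using Tfst by simp
qed simp

lemma Tpow_H: "T ` H = H \<Longrightarrow> (T ^^ k) ` H = H"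
proof (induction k)
  case (Suc k)
  have "(T ^^ Suc k) ` H = T ` ((T ^^ k) ` H)" by (simp add: image_image)
  then show ?case using Suc by simp
qed simp

lemma Tpow_Hsub: "T ` H \<subseteq> H \<Longrightarrow> (T ^^ k) ` H \<subseteq> H"
proof (induction k)
  case (Suc k)
  have "(T ^^ Suc k) ` H = T ` ((T ^^ k) ` H)" by (simp add: image_image)
  then show ?case using Suc by (metis image_mono order_trans)
qed simp

lemma small_pow:
  fixes d \<delta> :: real
  assumes "d > 0" "\<delta> > 0"
  shows "\<exists>k::nat. \<delta> < 2 ^ k * d"
proof -
  obtain k where k: "(1/2::real) ^ k < d / \<delta>" using real_arch_pow_inv[of "d/\<delta>" "1/2"] assms by auto
  then have "1 / 2 ^ k < d / \<delta>" by (simp add: power_divide)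
  then have "\<delta> < 2 ^ k * d" using assms by (simp add: field_simps)
  then show ?thesis by blast
qed

lemma min_gap:
  fixes S :: "real set"
  assumes "finite S"
  shows "\<exists>d>0. \<forall>s\<in>S. \<forall>t\<in>S. s \<noteq> t \<longrightarrow> d \<le> \<bar>s - t\<bar>"
proof -
  let ?D = "(\<lambda>(s, t). \<bar>s - t\<bar>) ` {(s, t). s \<in> S \<and> t \<in> S \<and> s \<noteq> t}"
  have fin: "finite ?D"
    by (rule finite_imageI, rule finite_subset[of _ "S \<times> S"]) (use assms in auto)
  show ?thesis
  proof (cases "?D = {}")
    case True
    then show ?thesis by (intro exI[of _ 1]) auto
  next
    case False
    have pos: "Min ?D > 0" using fin False by (subst Min_gr_iff) auto
    show ?thesis
      by (intro exI[of _ "Min ?D"] conjI pos ballI impI Min_le[OF fin]) auto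
  qed
qed

lemma contr_count:
  fixes T :: "('a \<times> real) \<Rightarrow> ('a \<times> real)"
  assumes Tfst: "\<And>\<eta> x. fst (T (\<eta>, x)) = \<phi> \<eta>" and injphi: "inj \<phi>"
    and TH: "T ` H = H" and Hsub: "H \<subseteq> UNIV \<times> unitI" and \<delta>: "\<delta> > 0"
    and contr: "\<And>\<eta> x y. (\<eta>, x) \<in> H \<Longrightarrow> (\<eta>, y) \<in> H \<Longrightarrow> \<bar>x - y\<bar> < \<delta> \<Longrightarrow>
        \<bar>snd (T (\<eta>, x)) - snd (T (\<eta>, y))\<bar> \<le> \<bar>x - y\<bar> / 2"
    and S: "finite S" "S \<subseteq> snd ` (H \<inter> ({\<xi>} \<times> unitI))"
  shows "card S \<le> nat \<lfloor>1 / \<delta>\<rfloor> + 1"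
proof -
  have Tsplit: "T (\<eta>, x) = (\<phi> \<eta>, snd (T (\<eta>, x)))" for \<eta> x
    using Tfst by (metis prod.collapse)
  have ck: "\<bar>snd ((T ^^ k) (\<eta>, x)) - snd ((T ^^ k) (\<eta>, y))\<bar> \<le> \<bar>x - y\<bar> / 2 ^ k"
    if "(\<eta>, x) \<in> H" "(\<eta>, y) \<in> H" "\<bar>x - y\<bar> < \<delta>" for k \<eta> x y
    using that
  proof (induction k arbitrary: \<eta> x y)
    case 0
    then show ?case by simp
  next
    case (Suc k)
    let ?x' = "snd (T (\<eta>, x))" and ?y' = "snd (T (\<eta>, y))"
    have hx: "(\<phi> \<eta>, ?x') \<in> H" using Suc.prems TH Tsplit by (metis image_eqI)
    have hy: "(\<phi> \<eta>, ?y') \<in> H" using Suc.prems TH Tsplit by (metis image_eqI)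
    have c1: "\<bar>?x' - ?y'\<bar> \<le> \<bar>x - y\<bar> / 2" using contr Suc.prems by blast
    have "\<bar>?x' - ?y'\<bar> < \<delta>" using c1 Suc.prems(3) abs_ge_zero[of "x - y"] by argo
    then have "\<bar>snd ((T ^^ k) (\<phi> \<eta>, ?x')) - snd ((T ^^ k) (\<phi> \<eta>, ?y'))\<bar> \<le> \<bar>?x' - ?y'\<bar> / 2 ^ k"
      using Suc.IH hx hy by blast
    also have "\<dots> \<le> (\<bar>x - y\<bar> / 2) / 2 ^ k" by (rule divide_right_mono[OF c1]) simp
    finally show ?case
      by (simp only: funpow_Suc_right o_apply, subst (1 2) Tsplit) simp
  qed
  obtain d where d: "d > 0" "\<forall>s\<in>S. \<forall>t\<in>S. s \<noteq> t \<longrightarrow> d \<le> \<bar>s - t\<bar>"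
    using min_gap[OF S(1)] by blast
  obtain k :: nat where k: "\<delta> < 2 ^ k * d" using small_pow[OF d(1) \<delta>] by blast
  have HK: "(T ^^ k) ` H = H" by (rule Tpow_H[OF TH])
  have "\<forall>s\<in>S. \<exists>z\<in>H. (T ^^ k) z = (\<xi>, s)"
  proof
    fix s assume "s \<in> S"
    then have "(\<xi>, s) \<in> H" using S(2) by auto
    then show "\<exists>z\<in>H. (T ^^ k) z = (\<xi>, s)" using HK by (metis imageE)
  qed
  then obtain pre where pre: "\<And>s. s \<in> S \<Longrightarrow> pre s \<in> H \<and> (T ^^ k) (pre s) = (\<xi>, s)"
    by metis
  have injk: "inj (\<phi> ^^ k)" using injphi by simp
  have samefst: "fst (pre s) = fst (pre t)" if "s \<in> S" "t \<in> S" for s t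
  proof -
    have "(\<phi> ^^ k) (fst (pre s)) = \<xi>"
      using pre[OF that(1)] Tpow_fst[of T \<phi> k "fst (pre s)" "snd (pre s)", OF Tfst] by simp
    moreover have "(\<phi> ^^ k) (fst (pre t)) = \<xi>"
      using pre[OF that(2)] Tpow_fst[of T \<phi> k "fst (pre t)" "snd (pre t)", OF Tfst] by simp
    ultimately show ?thesis using injk by (metis injD)
  qed
  let ?P = "(\<lambda>s. snd (pre s)) ` S"
  have injP: "inj_on (\<lambda>s. snd (pre s)) S"
  proof (rule inj_onI)
    fix s t assume st: "s \<in> S" "t \<in> S" "snd (pre s) = snd (pre t)"
    then have "pre s = pre t" using samefst by (metis prod.expand)
    then show "s = t" using pre st by (metis prod.inject)
  qed
  have Psub: "?P \<subseteq> unitI"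
  proof
    fix u assume "u \<in> ?P"
    then obtain s where "s \<in> S" "u = snd (pre s)" by auto
    then show "u \<in> unitI" using pre Hsub by (metis SigmaD2 mem_Sigma_iff prod.collapse subsetD)
  qed
  have sep: "\<forall>u\<in>?P. \<forall>v\<in>?P. u \<noteq> v \<longrightarrow> \<delta> \<le> \<bar>u - v\<bar>"
  proof (intro ballI impI)
    fix u v assume u: "u \<in> ?P" and v: "v \<in> ?P" and uv: "u \<noteq> v"
    obtain s where s: "s \<in> S" "u = snd (pre s)" using u by auto
    obtain t where t: "t \<in> S" "v = snd (pre t)" using v by auto
    have st: "s \<noteq> t" using s t uv by auto
    show "\<delta> \<le> \<bar>u - v\<bar>"
    proof (rule ccontr)
      assume "\<not> \<delta> \<le> \<bar>u - v\<bar>"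
      then have lt: "\<bar>u - v\<bar> < \<delta>" by simp
      let ?\<eta> = "fst (pre s)"
      have ps: "pre s = (?\<eta>, u)" using s by simp
      have pt: "pre t = (?\<eta>, v)" using t samefst[OF s(1) t(1)] by (metis prod.collapse)
      have "\<bar>snd ((T ^^ k) (?\<eta>, u)) - snd ((T ^^ k) (?\<eta>, v))\<bar> \<le> \<bar>u - v\<bar> / 2 ^ k"
        using ck[of ?\<eta> u v k] pre[OF s(1)] pre[OF t(1)] ps pt lt by auto
      then have "\<bar>s - t\<bar> \<le> \<bar>u - v\<bar> / 2 ^ k"
        using pre[OF s(1)] pre[OF t(1)] ps pt by auto
      also have "\<dots> < \<delta> / 2 ^ k" using lt by (simp add: divide_strict_right_mono)
      also have "\<dots> < d" using k by (simp add: field_simps)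
      finally show False using d(2) s(1) t(1) st by force
    qed
  qed
  have "card ?P \<le> nat \<lfloor>1 / \<delta>\<rfloor> + 1"
    by (rule sep_card[OF finite_imageI[OF S(1)] Psub \<delta> sep])
  then show ?thesis using card_image[OF injP] by simp
qed

lemma exp_count:
  fixes T :: "('a \<times> real) \<Rightarrow> ('a \<times> real)"
  assumes Tfst: "\<And>\<eta> x. fst (T (\<eta>, x)) = \<phi> \<eta>"
    and TH: "T ` H \<subseteq> H" and Hsub: "H \<subseteq> UNIV \<times> unitI" and \<delta>: "\<delta> > 0"
    and expd: "\<And>\<eta> x y. (\<eta>, x) \<in> H \<Longrightarrow> (\<eta>, y) \<in> H \<Longrightarrow>
        min (2 * \<delta>) (2 * \<bar>x - y\<bar>) \<le> \<bar>snd (T (\<eta>, x)) - snd (T (\<eta>, y))\<bar>"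
    and S: "finite S" "S \<subseteq> snd ` (H \<inter> ({\<xi>} \<times> unitI))"
  shows "card S \<le> nat \<lfloor>1 / \<delta>\<rfloor> + 1"
proof -
  have Tsplit: "T (\<eta>, x) = (\<phi> \<eta>, snd (T (\<eta>, x)))" for \<eta> x
    using Tfst by (metis prod.collapse)
  have ek: "min \<delta> (2 ^ k * \<bar>x - y\<bar>) \<le> \<bar>snd ((T ^^ k) (\<eta>, x)) - snd ((T ^^ k) (\<eta>, y))\<bar>"
    if "(\<eta>, x) \<in> H" "(\<eta>, y) \<in> H" for k \<eta> x y
    using that
  proof (induction k arbitrary: \<eta> x y)
    case 0
    then show ?case by simp
  next
    case (Suc k)
    let ?x' = "snd (T (\<eta>, x))" and ?y' = "snd (T (\<eta>, y))"
    have hx: "(\<phi> \<eta>, ?x') \<in> H" using Suc.prems TH Tsplit by (metis image_subset_iff)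
    have hy: "(\<phi> \<eta>, ?y') \<in> H" using Suc.prems TH Tsplit by (metis image_subset_iff)
    have c1: "min (2 * \<delta>) (2 * \<bar>x - y\<bar>) \<le> \<bar>?x' - ?y'\<bar>" using expd Suc.prems by blast
    have IH: "min \<delta> (2 ^ k * \<bar>?x' - ?y'\<bar>) \<le> \<bar>snd ((T ^^ k) (\<phi> \<eta>, ?x')) - snd ((T ^^ k) (\<phi> \<eta>, ?y'))\<bar>"
      using Suc.IH hx hy by blast
    have p: "(1::real) \<le> 2 ^ k" by simp
    have "min \<delta> (2 ^ Suc k * \<bar>x - y\<bar>) \<le> min \<delta> (2 ^ k * \<bar>?x' - ?y'\<bar>)"
    proof (cases "2 * \<delta> \<le> 2 * \<bar>x - y\<bar>")
      case True
      then have "2 * \<delta> \<le> \<bar>?x' - ?y'\<bar>" using c1 by simp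
      then have A1: "2 ^ k * (2 * \<delta>) \<le> 2 ^ k * \<bar>?x' - ?y'\<bar>" by simp
      have A2: "2 * \<delta> \<le> 2 ^ k * (2 * \<delta>)" using mult_right_mono[OF p, of "2 * \<delta>"] \<delta> by (simp only: mult_1)
      have A: "\<delta> \<le> 2 ^ k * \<bar>?x' - ?y'\<bar>" using A1 A2 \<delta> by linarith
      show ?thesis using A by (simp add: min_def)
    next
      case False
      then have "2 * \<bar>x - y\<bar> \<le> \<bar>?x' - ?y'\<bar>" using c1 by simp
      then have "2 ^ k * (2 * \<bar>x - y\<bar>) \<le> 2 ^ k * \<bar>?x' - ?y'\<bar>" by simp
      then have B: "2 ^ Suc k * \<bar>x - y\<bar> \<le> 2 ^ k * \<bar>?x' - ?y'\<bar>" by (simp add: mult.assoc mult.commute mult.left_commute)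
      show ?thesis by (rule min.mono[OF order.refl B])
    qed
    then show ?case using IH
      by (simp only: funpow_Suc_right o_apply, subst (1 2) Tsplit) linarith
  qed
  obtain d where d: "d > 0" "\<forall>s\<in>S. \<forall>t\<in>S. s \<noteq> t \<longrightarrow> d \<le> \<bar>s - t\<bar>"
    using min_gap[OF S(1)] by blast
  obtain k :: nat where k: "\<delta> < 2 ^ k * d" using small_pow[OF d(1) \<delta>] by blast
  have HK: "(T ^^ k) ` H \<subseteq> H" by (rule Tpow_Hsub[OF TH])
  let ?g = "\<lambda>s. snd ((T ^^ k) (\<xi>, s))"
  have inH: "(\<xi>, s) \<in> H" if "s \<in> S" for s using that S(2) by auto
  have sepS: "\<delta> \<le> \<bar>?g s - ?g t\<bar>" if "s \<in> S" "t \<in> S" "s \<noteq> t" for s t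
  proof -
    have "min \<delta> (2 ^ k * \<bar>s - t\<bar>) \<le> \<bar>?g s - ?g t\<bar>" using ek inH that by blast
    moreover have "\<delta> \<le> 2 ^ k * \<bar>s - t\<bar>"
    proof -
      have "d \<le> \<bar>s - t\<bar>" using d that by blast
      then have "2 ^ k * d \<le> 2 ^ k * \<bar>s - t\<bar>" by simp
      then show ?thesis using k by linarith
    qed
    ultimately show ?thesis by simp
  qed
  have injP: "inj_on ?g S"
  proof (rule inj_onI, rule ccontr)
    fix s t assume "s \<in> S" "t \<in> S" "?g s = ?g t" "s \<noteq> t"
    then show False using sepS[of s t] \<delta> by simp
  qed
  have Psub: "?g ` S \<subseteq> unitI"
  proof
    fix u assume "u \<in> ?g ` S"
    then obtain s where s: "s \<in> S" "u = ?g s" by auto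
    then have "(T ^^ k) (\<xi>, s) \<in> H" using HK inH by blast
    then show "u \<in> unitI" using s Hsub by (metis SigmaD2 prod.collapse subsetD)
  qed
  have sep: "\<forall>u\<in>?g ` S. \<forall>v\<in>?g ` S. u \<noteq> v \<longrightarrow> \<delta> \<le> \<bar>u - v\<bar>"
    using sepS by auto
  have "card (?g ` S) \<le> nat \<lfloor>1 / \<delta>\<rfloor> + 1"
    by (rule sep_card[OF finite_imageI[OF S(1)] Psub \<delta> sep])
  then show ?thesis using card_image[OF injP] by simp
qed



lemma sig: "\<eta> \<in> SigmaN N \<Longrightarrow> \<eta> k \<in> {1..N}"
  by (simp add: SigmaN_def)

lemma inj_shift: "inj shift"
proof (rule injI)
  fix a b :: "int \<Rightarrow> nat" assume "shift a = shift b"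
  then have "shift_inv (shift a) = shift_inv (shift b)" by simp
  moreover have "shift_inv (shift c) = c" for c :: "int \<Rightarrow> nat" by (simp add: shift_def shift_inv_def)
  ultimately show "a = b" by simp
qed

lemma shift_pow_Sigma: "\<eta> \<in> SigmaN N \<Longrightarrow> (shift ^^ n) \<eta> \<in> SigmaN N"
  by (simp add: shift_pow SigmaN_def)

context setting begin

lemma mvt_gcomp:
  assumes \<eta>: "\<eta> \<in> SigmaN N" and x: "x \<in> unitI" and y: "y \<in> unitI"
  shows "\<exists>z\<in>unitI. \<bar>z - x\<bar> \<le> \<bar>y - x\<bar> \<and> \<bar>gcomp f \<eta> m y - gcomp f \<eta> m x\<bar> = \<bar>Gd f fd \<eta> m z\<bar> * \<bar>y - x\<bar>"
proof -
  have der: "\<And>z. z \<in> unitI \<Longrightarrow> (gcomp f \<eta> m has_real_derivative Gd f fd \<eta> m z) (at z within unitI)"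
    by (rule gcomp_deriv) (use \<eta> sig in auto)
  consider "x = y" | "x < y" | "y < x" by linarith
  then show ?thesis
  proof cases
    case 1
    then show ?thesis using x by (intro bexI[of _ x]) auto
  next
    case 2
    obtain z where z: "x < z" "z < y" "gcomp f \<eta> m y - gcomp f \<eta> m x = Gd f fd \<eta> m z * (y - x)"
      using mvt_I[OF der x y 2] by blast
    show ?thesis using z x y by (intro bexI[of _ z]) (auto simp: abs_mult)
  next
    case 3
    obtain z where z: "y < z" "z < x" "gcomp f \<eta> m x - gcomp f \<eta> m y = Gd f fd \<eta> m z * (x - y)"
      using mvt_I[OF der y x 3] by blast
    have "\<bar>gcomp f \<eta> m y - gcomp f \<eta> m x\<bar> = \<bar>gcomp f \<eta> m x - gcomp f \<eta> m y\<bar>" by simp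
    also have "\<dots> = \<bar>Gd f fd \<eta> m z\<bar> * \<bar>y - x\<bar>" using z by (simp add: abs_mult abs_minus_commute)
    finally show ?thesis using z x y by (intro bexI[of _ z]) auto
  qed
qed

lemma skewF_pow_in: "z \<in> SigmaN N \<times> unitI \<Longrightarrow> (skewF f ^^ n) z \<in> SigmaN N \<times> unitI"
proof -
  assume z: "z \<in> SigmaN N \<times> unitI"
  obtain \<eta> q where e: "z = (\<eta>, q)" by (cases z)
  have "gcomp f \<eta> n q \<in> unitI" by (rule gcomp_in) (use z e sig in auto)
  then show ?thesis using z e shift_pow_Sigma by (auto simp: skewF_pow)
qed

lemma inv_pow_pow: "z \<in> SigmaN N \<times> unitI \<Longrightarrow> (skewF_inv f ^^ n) ((skewF f ^^ n) z) = z"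
proof (induction n)
  case (Suc n)
  have w: "(skewF f ^^ n) z \<in> SigmaN N \<times> unitI" using skewF_pow_in Suc.prems by blast
  obtain \<eta> q where e: "(skewF f ^^ n) z = (\<eta>, q)" by (cases "(skewF f ^^ n) z")
  have "skewF_inv f (skewF f ((skewF f ^^ n) z)) = (skewF f ^^ n) z"
    unfolding e by (rule skewF_inv_skewF[of _ N]) (use w e sig inj in auto)
  have "(skewF_inv f ^^ Suc n) ((skewF f ^^ Suc n) z) = (skewF_inv f ^^ n) ((skewF f ^^ n) z)"
  proof -
    have a: "(skewF f ^^ Suc n) z = skewF f ((skewF f ^^ n) z)" by simp
    have b: "(skewF_inv f ^^ Suc n) w = (skewF_inv f ^^ n) (skewF_inv f w)" for w
      by (simp only: funpow_Suc_right o_apply)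
    show ?thesis using \<open>skewF_inv f (skewF f ((skewF f ^^ n) z)) = (skewF f ^^ n) z\<close> by (simp only: a b)
  qed
  then show ?case using Suc by simp
qed simp

end


lemma pick_m:
  fixes c lam :: real
  assumes "c > 0" "0 < lam" "lam < 1"
  shows "\<exists>m\<ge>1. c * lam ^ m < 1/4"
proof -
  obtain n0 where n0: "lam ^ n0 < 1 / (4 * c)" using real_arch_pow_inv[of "1/(4*c)" lam] assms by auto
  have "lam ^ Suc n0 \<le> lam ^ n0" using assms by (simp add: power_decreasing)
  then have "lam ^ Suc n0 < 1 / (4 * c)" using n0 by linarith
  then have "c * lam ^ Suc n0 < 1/4" using assms by (simp add: field_simps)
  then show ?thesis by (intro exI[of _ "Suc n0"]) auto
qed

context setting begin

lemma vd_gcomp: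
  assumes "\<eta> \<in> SigmaN N" "x \<in> unitI"
  shows "vector_derivative (\<lambda>q. snd ((skewF f ^^ m) (\<eta>, q))) (at x within unitI) = Gd f fd \<eta> m x"
proof -
  have e: "(\<lambda>q. snd ((skewF f ^^ m) (\<eta>, q))) = gcomp f \<eta> m" by (simp add: skewF_pow)
  have "(gcomp f \<eta> m has_real_derivative Gd f fd \<eta> m x) (at x within unitI)"
    by (rule gcomp_deriv) (use assms sig in auto)
  then have "(gcomp f \<eta> m has_vector_derivative Gd f fd \<eta> m x) (at x within {0..1})"
    using has_real_derivative_iff_has_vector_derivative by blast
  then show ?thesis unfolding e
    using vector_derivative_within_closed_interval[of 0 1 x "gcomp f \<eta> m"] assms(2) by simp
qed

lemma contr_case:
  assumes Hs: "H \<subseteq> SigmaN N \<times> unitI" and Hinv: "skewF f ` H = H"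
    and hyp: "hyp_fiber_contraction f H"
  shows "\<exists>\<delta>::real>0. \<forall>\<xi> S. finite S \<and> S \<subseteq> fiber H \<xi> \<longrightarrow> card S \<le> nat \<lfloor>1 / \<delta>\<rfloor> + 1"
proof -
  obtain c lam where cl: "c > 0" "0 < lam" "lam < 1"
    and bd: "\<forall>n\<ge>1. \<forall>(\<xi>, p)\<in>H. \<bar>vector_derivative (\<lambda>q. snd ((skewF f ^^ n) (\<xi>, q))) (at p within unitI)\<bar> \<le> c * lam ^ n"
    using hyp unfolding hyp_fiber_contraction_def by blast
  obtain m where m: "m \<ge> 1" "c * lam ^ m < 1/4" using pick_m[OF cl] by blast
  have Gs: "\<bar>Gd f fd \<eta> m x\<bar> \<le> 1/4" if "(\<eta>, x) \<in> H" for \<eta> x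
  proof -
    have "\<eta> \<in> SigmaN N" "x \<in> unitI" using that Hs by auto
    then have "vector_derivative (\<lambda>q. snd ((skewF f ^^ m) (\<eta>, q))) (at x within unitI) = Gd f fd \<eta> m x"
      by (rule vd_gcomp)
    moreover have "\<bar>vector_derivative (\<lambda>q. snd ((skewF f ^^ m) (\<eta>, q))) (at x within unitI)\<bar> \<le> c * lam ^ m"
      using bd m(1) that by fastforce
    ultimately show ?thesis using m(2) by simp
  qed
  obtain \<delta> where d: "\<delta> > 0" "\<forall>\<eta>\<in>SigmaN N. \<forall>x\<in>unitI. \<forall>y\<in>unitI. \<bar>x - y\<bar> < \<delta> \<longrightarrow> \<bar>Gd f fd \<eta> m x - Gd f fd \<eta> m y\<bar> < 1/4"
    using Gd_unif[of "1/4" m] by auto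
  have contr: "\<bar>snd ((skewF f ^^ m) (\<eta>, x)) - snd ((skewF f ^^ m) (\<eta>, y))\<bar> \<le> \<bar>x - y\<bar> / 2"
    if hx: "(\<eta>, x) \<in> H" and hy: "(\<eta>, y) \<in> H" and xy: "\<bar>x - y\<bar> < \<delta>" for \<eta> x y
  proof -
    have \<eta>: "\<eta> \<in> SigmaN N" and x: "x \<in> unitI" and y: "y \<in> unitI" using hx hy Hs by auto
    obtain z where z: "z \<in> unitI" "\<bar>z - x\<bar> \<le> \<bar>y - x\<bar>"
      "\<bar>gcomp f \<eta> m y - gcomp f \<eta> m x\<bar> = \<bar>Gd f fd \<eta> m z\<bar> * \<bar>y - x\<bar>"
      using mvt_gcomp[OF \<eta> x y] by blast
    have "\<bar>x - z\<bar> < \<delta>" using z(2) xy by (simp add: abs_minus_commute)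
    then have "\<bar>Gd f fd \<eta> m x - Gd f fd \<eta> m z\<bar> < 1/4" using d(2) \<eta> x z(1) by blast
    then have "\<bar>Gd f fd \<eta> m z\<bar> \<le> 1/2" using Gs[OF hx] by linarith
    then have "\<bar>Gd f fd \<eta> m z\<bar> * \<bar>y - x\<bar> \<le> 1/2 * \<bar>y - x\<bar>" by (rule mult_right_mono) simp
    then show ?thesis using z(3) by (simp add: skewF_pow abs_minus_commute)
  qed
  have Tfst: "fst ((skewF f ^^ m) (\<eta>, x)) = (shift ^^ m) \<eta>" for \<eta> x by (simp add: skewF_pow)
  have injphi: "inj (shift ^^ m)" using inj_shift by simp
  have TH: "(skewF f ^^ m) ` H = H" by (rule Tpow_H[OF Hinv])
  have Hs': "H \<subseteq> UNIV \<times> unitI" using Hs by auto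
  show ?thesis
  proof (intro exI[of _ \<delta>] conjI allI impI)
    fix \<xi> S assume S: "finite S \<and> S \<subseteq> fiber H \<xi>"
    show "card S \<le> nat \<lfloor>1 / \<delta>\<rfloor> + 1"
      by (rule contr_count[of "skewF f ^^ m" "shift ^^ m", OF Tfst injphi TH Hs' d(1) contr])
         (use S in \<open>auto simp: fiber_def\<close>)
  qed (use d in auto)
qed

end


context setting begin

lemma Gd_big:
  assumes Hs: "H \<subseteq> SigmaN N \<times> unitI" and Hinv: "skewF f ` H = H"
    and bd: "\<forall>(\<xi>, p)\<in>H. \<bar>vector_derivative (\<lambda>q. snd ((skewF_inv f ^^ m) (\<xi>, q)))
              (at p within ((\<lambda>q. snd ((skewF f ^^ m) ((shift_inv ^^ m) \<xi>, q))) ` unitI))\<bar> < 1/4"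
    and hx: "(\<eta>, x) \<in> H"
  shows "4 < \<bar>Gd f fd \<eta> m x\<bar>"
proof -
  have \<eta>: "\<eta> \<in> SigmaN N" and x: "x \<in> unitI" using hx Hs by auto
  have sj: "\<And>j. j < m \<Longrightarrow> \<eta> (int j) \<in> {1..N}" using \<eta> sig by blast
  define \<xi> where "\<xi> = (shift ^^ m) \<eta>"
  define g where "g = gcomp f \<eta> m"
  define h where "h = (\<lambda>q. snd ((skewF_inv f ^^ m) (\<xi>, q)))"
  have "(\<xi>, g x) = (skewF f ^^ m) (\<eta>, x)" by (simp add: skewF_pow \<xi>_def g_def)
  then have hp: "(\<xi>, g x) \<in> H" using Tpow_H[OF Hinv, of m] hx by (metis image_eqI)
  have J: "(\<lambda>q. snd ((skewF f ^^ m) ((shift_inv ^^ m) \<xi>, q))) ` unitI = g ` unitI"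
    by (simp add: \<xi>_def shift_inv_shift_pow skewF_pow g_def)
  have bdp: "\<bar>vector_derivative h (at (g x) within g ` unitI)\<bar> < 1/4"
    using bd hp J unfolding h_def by fastforce
  have hg: "h (g y) = y" if "y \<in> unitI" for y
  proof -
    have "(skewF f ^^ m) (\<eta>, y) = (\<xi>, g y)" by (simp add: skewF_pow \<xi>_def g_def)
    moreover have "(skewF_inv f ^^ m) ((skewF f ^^ m) (\<eta>, y)) = (\<eta>, y)"
      by (rule inv_pow_pow) (use \<eta> that in auto)
    ultimately show ?thesis by (simp add: h_def)
  qed
  have gc: "continuous_on unitI g" unfolding g_def by (rule gcomp_cont[of m \<eta>, OF sj])
  have hc: "continuous_on (g ` unitI) h"
    by (rule continuous_on_inv[OF gc compact_Icc]) (use hg in auto)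
  then have hcw: "continuous (at (g x) within g ` unitI) h"
    using x by (simp add: continuous_on_eq_continuous_within)
  have dg: "(g has_real_derivative Gd f fd \<eta> m x) (at x within unitI)"
    unfolding g_def by (rule gcomp_deriv[of m \<eta>, OF sj x])
  have nz: "Gd f fd \<eta> m x \<noteq> 0" by (rule Gd_nz[of m \<eta>, OF sj x])
  have dh: "(h has_real_derivative inverse (Gd f fd \<eta> m x)) (at (g x) within g ` unitI)"
    by (rule inv_deriv_within[OF dg nz x hg hcw])
  have "connected (g ` unitI)" by (rule connected_continuous_image[OF gc]) simp
  moreover have "compact (g ` unitI)" by (rule compact_continuous_image[OF gc]) simp
  ultimately obtain a b where ab: "g ` unitI = {a..b}" using connected_compact_interval_1 by blast
  have "g 0 \<noteq> g 1" using gcomp_inj[of m \<eta>, OF sj] unfolding g_def by (metis atLeastAtMost_iff inj_on_contraD order.refl zero_le_one zero_neq_one)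
  moreover have "g 0 \<in> {a..b}" "g 1 \<in> {a..b}" using ab by auto
  ultimately have "a < b" by auto
  have gx: "g x \<in> {a..b}" using ab x by auto
  have "(h has_vector_derivative inverse (Gd f fd \<eta> m x)) (at (g x) within {a..b})"
    using dh ab has_real_derivative_iff_has_vector_derivative by metis
  then have "vector_derivative h (at (g x) within {a..b}) = inverse (Gd f fd \<eta> m x)"
    by (rule vector_derivative_within_closed_interval[OF \<open>a < b\<close> gx])
  then have "\<bar>inverse (Gd f fd \<eta> m x)\<bar> < 1/4" using bdp ab by simp
  then have "1 / \<bar>Gd f fd \<eta> m x\<bar> < 1/4" by (simp add: abs_inverse inverse_eq_divide)
  moreover have "0 < \<bar>Gd f fd \<eta> m x\<bar>" using nz by simp
  ultimately show ?thesis by (simp add: field_simps)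
qed

lemma exp_case:
  assumes Hs: "H \<subseteq> SigmaN N \<times> unitI" and Hinv: "skewF f ` H = H"
    and hyp: "hyp_fiber_expansion f H"
  shows "\<exists>\<delta>::real>0. \<forall>\<xi> S. finite S \<and> S \<subseteq> fiber H \<xi> \<longrightarrow> card S \<le> nat \<lfloor>1 / \<delta>\<rfloor> + 1"
proof -
  obtain c lam where cl: "c > 0" "0 < lam" "lam < 1"
    and bd: "\<forall>n\<ge>1. \<forall>(\<xi>, p)\<in>H. \<bar>vector_derivative (\<lambda>q. snd ((skewF_inv f ^^ n) (\<xi>, q)))
              (at p within ((\<lambda>q. snd ((skewF f ^^ n) ((shift_inv ^^ n) \<xi>, q))) ` unitI))\<bar>
            \<le> c * lam ^ n"
    using hyp unfolding hyp_fiber_expansion_def by blast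
  obtain m where m: "m \<ge> 1" "c * lam ^ m < 1/4" using pick_m[OF cl] by blast
  have bdm: "\<forall>(\<xi>, p)\<in>H. \<bar>vector_derivative (\<lambda>q. snd ((skewF_inv f ^^ m) (\<xi>, q)))
              (at p within ((\<lambda>q. snd ((skewF f ^^ m) ((shift_inv ^^ m) \<xi>, q))) ` unitI))\<bar> < 1/4"
    using bd m by fastforce
  have Gb: "4 < \<bar>Gd f fd \<eta> m x\<bar>" if "(\<eta>, x) \<in> H" for \<eta> x
    by (rule Gd_big[OF Hs Hinv bdm that])
  obtain \<delta>1 where d: "\<delta>1 > 0" "\<forall>\<eta>\<in>SigmaN N. \<forall>x\<in>unitI. \<forall>y\<in>unitI. \<bar>x - y\<bar> < \<delta>1 \<longrightarrow> \<bar>Gd f fd \<eta> m x - Gd f fd \<eta> m y\<bar> < 1"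
    using Gd_unif[of 1 m] by auto
  define \<delta> where "\<delta> = \<delta>1 / 2"
  have \<delta>: "\<delta> > 0" "\<delta> < \<delta>1" using d(1) by (auto simp: \<delta>_def)
  have near: "3 * \<bar>y - x\<bar> \<le> \<bar>gcomp f \<eta> m y - gcomp f \<eta> m x\<bar>"
    if hx: "(\<eta>, x) \<in> H" and y: "y \<in> unitI" and xy: "\<bar>y - x\<bar> < \<delta>1" for \<eta> x y
  proof -
    have \<eta>: "\<eta> \<in> SigmaN N" and x: "x \<in> unitI" using hx Hs by auto
    obtain z where z: "z \<in> unitI" "\<bar>z - x\<bar> \<le> \<bar>y - x\<bar>"
      "\<bar>gcomp f \<eta> m y - gcomp f \<eta> m x\<bar> = \<bar>Gd f fd \<eta> m z\<bar> * \<bar>y - x\<bar>"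
      using mvt_gcomp[OF \<eta> x y] by blast
    have "\<bar>x - z\<bar> < \<delta>1" using z(2) xy by (simp add: abs_minus_commute)
    then have "\<bar>Gd f fd \<eta> m x - Gd f fd \<eta> m z\<bar> < 1" using d(2) \<eta> x z(1) by blast
    then have "3 \<le> \<bar>Gd f fd \<eta> m z\<bar>" using Gb[OF hx] by linarith
    then have "3 * \<bar>y - x\<bar> \<le> \<bar>Gd f fd \<eta> m z\<bar> * \<bar>y - x\<bar>" by (rule mult_right_mono) simp
    then show ?thesis using z(3) by simp
  qed
  have expd: "min (2 * \<delta>) (2 * \<bar>x - y\<bar>) \<le> \<bar>snd ((skewF f ^^ m) (\<eta>, x)) - snd ((skewF f ^^ m) (\<eta>, y))\<bar>"
    if hx: "(\<eta>, x) \<in> H" and hy: "(\<eta>, y) \<in> H" for \<eta> x y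
  proof -
    have \<eta>: "\<eta> \<in> SigmaN N" and x: "x \<in> unitI" and y: "y \<in> unitI" using hx hy Hs by auto
    have sj: "\<And>j. j < m \<Longrightarrow> \<eta> (int j) \<in> {1..N}" using \<eta> sig by blast
    let ?g = "gcomp f \<eta> m"
    have gc: "continuous_on unitI ?g" by (rule gcomp_cont[of m \<eta>, OF sj])
    have gi: "inj_on ?g unitI" by (rule gcomp_inj[of m \<eta>, OF sj])
    have "min (2 * \<delta>) (2 * \<bar>x - y\<bar>) \<le> \<bar>?g x - ?g y\<bar>"
    proof (cases "\<bar>y - x\<bar> < \<delta>1")
      case True
      then show ?thesis using near[OF hx y True] by (simp add: abs_minus_commute)
    next
      case False
      consider "x < y" | "y < x" using False d(1) by fastforce
      then have "3 * \<delta> \<le> \<bar>?g x - ?g y\<bar>"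
      proof cases
        case 1
        define z where "z = x + \<delta>"
        have z: "x < z" "z < y" "z \<in> unitI" using 1 False \<delta> x y by (auto simp: z_def)
        have n: "3 * \<delta> \<le> \<bar>?g z - ?g x\<bar>" using near[OF hx z(3)] \<delta> by (simp add: z_def)
        have "continuous_on {x..y} ?g" by (rule continuous_on_subset[OF gc]) (use x y in auto)
        moreover have "inj_on ?g {x..y}" by (rule inj_on_subset[OF gi]) (use x y in auto)
        ultimately have "(?g x < ?g z \<and> ?g z < ?g y) \<or> (?g y < ?g z \<and> ?g z < ?g x)"
          using continuous_inj_imp_mono[OF z(1,2)] by blast
        then show ?thesis using n by auto
      next
        case 2
        define z where "z = x - \<delta>"
        have z: "y < z" "z < x" "z \<in> unitI" using 2 False \<delta> x y by (auto simp: z_def)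
        have n: "3 * \<delta> \<le> \<bar>?g z - ?g x\<bar>" using near[OF hx z(3)] \<delta> by (simp add: z_def)
        have "continuous_on {y..x} ?g" by (rule continuous_on_subset[OF gc]) (use x y in auto)
        moreover have "inj_on ?g {y..x}" by (rule inj_on_subset[OF gi]) (use x y in auto)
        ultimately have "(?g y < ?g z \<and> ?g z < ?g x) \<or> (?g x < ?g z \<and> ?g z < ?g y)"
          using continuous_inj_imp_mono[OF z(1,2)] by blast
        then show ?thesis using n by auto
      qed
      then show ?thesis using \<delta> by linarith
    qed
    then show ?thesis by (simp add: skewF_pow)
  qed
  have Tfst: "fst ((skewF f ^^ m) (\<eta>, x)) = (shift ^^ m) \<eta>" for \<eta> x by (simp add: skewF_pow)
  have TH: "(skewF f ^^ m) ` H \<subseteq> H" using Tpow_H[OF Hinv] by simp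
  have Hs': "H \<subseteq> UNIV \<times> unitI" using Hs by auto
  show ?thesis
  proof (intro exI[of _ \<delta>] conjI allI impI)
    fix \<xi> S assume S: "finite S \<and> S \<subseteq> fiber H \<xi>"
    show "card S \<le> nat \<lfloor>1 / \<delta>\<rfloor> + 1"
      by (rule exp_count[of "skewF f ^^ m" "shift ^^ m", OF Tfst TH Hs' \<delta>(1) expd])
         (use S in \<open>auto simp: fiber_def\<close>)
  qed (use \<delta> in auto)
qed

end


lemma bound_to_fiber:
  assumes "\<forall>S. finite S \<and> S \<subseteq> A \<longrightarrow> card S \<le> M"
  shows "finite A \<and> card A \<le> M"
proof -
  have "finite A"
  proof (rule ccontr)
    assume "\<not> finite A"
    then obtain B where "finite B" "card B = Suc M" "B \<subseteq> A" using infinite_arbitrarily_large by blast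
    then show False using assms by fastforce
  qed
  then show ?thesis using assms by blast
qed

theorem theoremA:
  fixes N :: nat and f :: "nat \<Rightarrow> real \<Rightarrow> real"
    and H :: "((int \<Rightarrow> nat) \<times> real) set"
  assumes diffeo: "\<forall>i\<in>{1..N}. C1_diffeo_into_I (f i)"
    and H_sub: "H \<subseteq> LambdaSet N f"
    and H_inv: "skewF f ` H = H"
    and H_hyp: "hyperbolic_set f H"
  shows "\<exists>M::nat. M \<ge> 1 \<and>
           (\<forall>\<xi>\<in>SigmaN N. finite (fiber H \<xi>) \<and> card (fiber H \<xi>) \<le> M)"
proof -
  have "\<forall>i\<in>{1..N}. \<exists>fd. (\<forall>x\<in>unitI. (f i has_real_derivative fd x) (at x within unitI)) \<and>
           continuous_on unitI fd \<and> (\<forall>x\<in>unitI. fd x \<noteq> 0)"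
    using diffeo unfolding C1_diffeo_into_I_def by blast
  then obtain fd where fd: "\<forall>i\<in>{1..N}. (\<forall>x\<in>unitI. (f i has_real_derivative fd i x) (at x within unitI)) \<and>
           continuous_on unitI (fd i) \<and> (\<forall>x\<in>unitI. fd i x \<noteq> 0)"
    by metis
  interpret setting N f fd
  proof
    fix i x assume "i \<in> {1..N}" "x \<in> unitI"
    then show "f i x \<in> unitI" using diffeo unfolding C1_diffeo_into_I_def by blast
  next
    fix i assume "i \<in> {1..N}"
    then show "inj_on (f i) unitI" using diffeo unfolding C1_diffeo_into_I_def by blast
  next
    fix i x assume "i \<in> {1..N}" "x \<in> unitI"
    then show "(f i has_real_derivative fd i x) (at x within unitI)" using fd by blast
  next
    fix i assume "i \<in> {1..N}"
    then show "continuous_on unitI (fd i)" using fd by blast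
  next
    fix i x assume "i \<in> {1..N}" "x \<in> unitI"
    then show "fd i x \<noteq> 0" using fd by blast
  qed
  have Hs: "H \<subseteq> SigmaN N \<times> unitI"
  proof -
    have "LambdaSet N f \<subseteq> (skewF f ^^ 0) ` (SigmaN N \<times> unitI)"
      unfolding LambdaSet_def by blast
    then show ?thesis using H_sub by simp
  qed
  obtain \<delta> :: real where d: "\<delta> > 0" "\<forall>\<xi> S. finite S \<and> S \<subseteq> fiber H \<xi> \<longrightarrow> card S \<le> nat \<lfloor>1 / \<delta>\<rfloor> + 1"
    using H_hyp contr_case[OF Hs H_inv] exp_case[OF Hs H_inv] unfolding hyperbolic_set_def by blast
  show ?thesis
    by (intro exI[of _ "nat \<lfloor>1 / \<delta>\<rfloor> + 1"] conjI ballI bound_to_fiber) (use d in auto)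
qed


end
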